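(* For every graph $G$ the following are equivalent. (1) $G$ is a pseudo-cograph. (2) $G$ is a cograph, or there is a vertex $v\in V(G)$ such that (B1) $G-v$ or $\overline{G-v}$ is disconnected, with $\mathfrak C$ the set of connected components of that disconnected graph; (B2) $G[V(H)\cup\{v\}]$ is a cograph for every $H\in\mathfrak C$; and (B3) all edges of the graph $\Gamma(G,v)$ are incident to one common vertex. (3) $G$ is a cograph, or there is a vertex $v\in V(G)$ such that (C1) $G-v$ or $\overline{G-v}$ is disconnected, with $\mathfrak C$ the set of connected components of that disconnected graph; and (C2) there is at least one and at most two components $H\in\mathfrak C$ such that both $G[V(H)\cup\{v\}]$ and $G[V(G)\setminus V(H)]$ are cographs.
   Context: Graphs finite, simple, undirected; $G[W]$ induced subgraph; $G-v$ is $G$ with $v$ deleted; $\overline H$ complement; the join of vertex-disjoint graphs adds all edges between them to the disjoint union; a cograph is a graph without induced $P_4$. $G$ is a pseudo-cograph if $|V(G)|\le2$ or there are induced subgraphs $G_1,G_2$ and $v\in V(G)$ with (F1) $V(G)=V(G_1)\cup V(G_2)$, $V(G_1)\cap V(G_2)=\{v\}$, $|V(G_1)|,|V(G_2)|>1$; (F2) $G_1,G_2$ cographs; (F3) $G-v$ is the join or the disjoint union of $G_1-v$ and $G_2-v$. Given $v$ and $\mathfrak C$ as in (B1), $\Gamma(G,v)$ is the undirected graph with vertex set $\mathfrak C$ in which $\{H,H'\}$ is an edge iff the subgraph of $G$ induced by $V(H)\cup V(H')\cup\{v\}$ contains an induced $P_4$. *)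

theory Defs
  imports Main
begin

text \<open>A finite simple undirected graph is given by a finite vertex set V and a
symmetric irreflexive edge relation E. Induced subgraphs G[W] are (W, E).\<close>

definition graph :: "'a set \<Rightarrow> ('a \<Rightarrow> 'a \<Rightarrow> bool) \<Rightarrow> bool" where
  "graph V E \<longleftrightarrow> finite V \<and> (\<forall>x y. E x y \<longrightarrow> E y x) \<and> (\<forall>x. \<not> E x x)"

definition compl_edges :: "('a \<Rightarrow> 'a \<Rightarrow> bool) \<Rightarrow> 'a \<Rightarrow> 'a \<Rightarrow> bool" where
  "compl_edges E x y \<longleftrightarrow> x \<noteq> y \<and> \<not> E x y"

definition has_induced_P4 :: "'a set \<Rightarrow> ('a \<Rightarrow> 'a \<Rightarrow> bool) \<Rightarrow> bool" where
  "has_induced_P4 V E \<longleftrightarrow> (\<exists>a\<in>V. \<exists>b\<in>V. \<exists>c\<in>V. \<exists>d\<in>V.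
      distinct [a, b, c, d] \<and> E a b \<and> E b c \<and> E c d \<and>
      \<not> E a c \<and> \<not> E a d \<and> \<not> E b d)"

definition cograph :: "'a set \<Rightarrow> ('a \<Rightarrow> 'a \<Rightarrow> bool) \<Rightarrow> bool" where
  "cograph V E \<longleftrightarrow> \<not> has_induced_P4 V E"

definition reach :: "'a set \<Rightarrow> ('a \<Rightarrow> 'a \<Rightarrow> bool) \<Rightarrow> 'a \<Rightarrow> 'a \<Rightarrow> bool" where
  "reach V E = (\<lambda>x y. x \<in> V \<and> y \<in> V \<and> E x y)\<^sup>*\<^sup>*"

definition components :: "'a set \<Rightarrow> ('a \<Rightarrow> 'a \<Rightarrow> bool) \<Rightarrow> 'a set set" where
  "components V E = {{y \<in> V. reach V E x y} | x. x \<in> V}"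

definition disconnected :: "'a set \<Rightarrow> ('a \<Rightarrow> 'a \<Rightarrow> bool) \<Rightarrow> bool" where
  "disconnected V E \<longleftrightarrow> (\<exists>x\<in>V. \<exists>y\<in>V. \<not> reach V E x y)"

definition pseudo_cograph :: "'a set \<Rightarrow> ('a \<Rightarrow> 'a \<Rightarrow> bool) \<Rightarrow> bool" where
  "pseudo_cograph V E \<longleftrightarrow> card V \<le> 2 \<or>
     (\<exists>V1 V2 v. V1 \<subseteq> V \<and> V2 \<subseteq> V \<and> v \<in> V \<and>
        V = V1 \<union> V2 \<and> V1 \<inter> V2 = {v} \<and> card V1 > 1 \<and> card V2 > 1 \<and>
        cograph V1 E \<and> cograph V2 E \<and>
        ((\<forall>x\<in>V1 - {v}. \<forall>y\<in>V2 - {v}. E x y) \<or>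
         (\<forall>x\<in>V1 - {v}. \<forall>y\<in>V2 - {v}. \<not> E x y)))"

text \<open>Edge {H,H'} of Gamma(G,v), for H, H' in the component set.\<close>
definition Gamma_edge :: "'a set \<Rightarrow> ('a \<Rightarrow> 'a \<Rightarrow> bool) \<Rightarrow> 'a \<Rightarrow> 'a set \<Rightarrow> 'a set \<Rightarrow> bool" where
  "Gamma_edge V E v H H' \<longleftrightarrow> H \<noteq> H' \<and> has_induced_P4 (H \<union> H' \<union> {v}) E"

end

theory Submission
  imports Defs
begin

definition symirr :: "('a \<Rightarrow> 'a \<Rightarrow> bool) \<Rightarrow> bool" where
  "symirr E \<longleftrightarrow> (\<forall>x y. E x y \<longrightarrow> E y x) \<and> (\<forall>x. \<not> E x x)"

lemma graph_symirr: "graph V E \<Longrightarrow> symirr E"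
  by (simp add: graph_def symirr_def)

lemma symirr_compl: "symirr E \<Longrightarrow> symirr (compl_edges E)"
  by (auto simp: symirr_def compl_edges_def)

lemma compl_compl: "symirr E \<Longrightarrow> compl_edges (compl_edges E) = E"
  by (auto simp: symirr_def compl_edges_def fun_eq_iff)

lemma graph_compl: "graph V E \<Longrightarrow> graph V (compl_edges E)"
  by (auto simp: graph_def compl_edges_def)

lemma P4_compl1: "symirr E \<Longrightarrow> has_induced_P4 W E \<Longrightarrow> has_induced_P4 W (compl_edges E)"
  unfolding has_induced_P4_def symirr_def compl_edges_def
  apply clarify
  subgoal for a b c d
    apply (rule bexI[of _ b], rule bexI[of _ d], rule bexI[of _ a], rule bexI[of _ c])
    by auto
  done

lemma P4_compl: "symirr E \<Longrightarrow> has_induced_P4 W (compl_edges E) \<longleftrightarrow> has_induced_P4 W E"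
  using P4_compl1[of E W] P4_compl1[of "compl_edges E" W] symirr_compl[of E] compl_compl[of E]
  by auto

lemma cograph_compl: "symirr E \<Longrightarrow> cograph W (compl_edges E) \<longleftrightarrow> cograph W E"
  by (simp add: cograph_def P4_compl)

lemma P4_mono: "has_induced_P4 W E \<Longrightarrow> W \<subseteq> W' \<Longrightarrow> has_induced_P4 W' E"
  unfolding has_induced_P4_def by blast

lemma cograph_mono: "cograph W E \<Longrightarrow> W' \<subseteq> W \<Longrightarrow> cograph W' E"
  unfolding cograph_def using P4_mono by blast

lemma P4_I: "a \<in> W \<Longrightarrow> b \<in> W \<Longrightarrow> c \<in> W \<Longrightarrow> d \<in> W \<Longrightarrow> distinct [a,b,c,d] \<Longrightarrow>
   E a b \<Longrightarrow> E b c \<Longrightarrow> E c d \<Longrightarrow> \<not> E a c \<Longrightarrow> \<not> E a d \<Longrightarrow> \<not> E b d \<Longrightarrow> has_induced_P4 W E"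
  unfolding has_induced_P4_def by blast

lemma Gamma_compl: "symirr E \<Longrightarrow> Gamma_edge V (compl_edges E) v H K = Gamma_edge V E v H K"
  by (simp add: Gamma_edge_def P4_compl)

lemma small_cograph: "finite V \<Longrightarrow> card V \<le> 2 \<Longrightarrow> cograph V E"
  unfolding cograph_def has_induced_P4_def
proof clarify
  fix a b c d assume "finite V" "card V \<le> 2" "a\<in>V" "b\<in>V" "c\<in>V" "d\<in>V" "distinct [a,b,c,d]"
  then have "card {a,b,c,d} = 4" by auto
  moreover have "card {a,b,c,d} \<le> card V" using \<open>finite V\<close> \<open>a\<in>V\<close> \<open>b\<in>V\<close> \<open>c\<in>V\<close> \<open>d\<in>V\<close>
    by (intro card_mono) auto
  ultimately show False using \<open>card V \<le> 2\<close> by simp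
qed

lemma reach_refl: "reach W E x x" by (simp add: reach_def)

lemma reach_edge: "x \<in> W \<Longrightarrow> y \<in> W \<Longrightarrow> E x y \<Longrightarrow> reach W E x y"
  unfolding reach_def by (rule r_into_rtranclp) simp

lemma reach_trans: "reach W E x y \<Longrightarrow> reach W E y z \<Longrightarrow> reach W E x z"
  unfolding reach_def by (rule rtranclp_trans)

lemma reach_sym: assumes "symirr E" "reach W E x y" shows "reach W E y x"
  using assms(2) unfolding reach_def
proof (induction rule: rtranclp_induct)
  case base then show ?case by simp
next
  case (step y z)
  then have "(\<lambda>x y. x \<in> W \<and> y \<in> W \<and> E x y) z y" using assms(1) by (auto simp: symirr_def)
  then show ?case using step(3) by (rule converse_rtranclp_into_rtranclp)
qed

lemma reach_closed: assumes "reach W E x y" "x \<in> S" "\<And>a b. a \<in> S \<Longrightarrow> b \<in> W \<Longrightarrow> E a b \<Longrightarrow> b \<in> S"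
  shows "y \<in> S"
  using assms(1) unfolding reach_def
  by (induction rule: rtranclp_induct) (use assms in auto)

lemma reach_in: "reach W E x y \<Longrightarrow> x \<in> W \<Longrightarrow> y \<in> W"
  using reach_closed[of W E x y W] by blast

lemma reach_mono: assumes "reach W E x y" "W \<subseteq> W'" shows "reach W' E x y"
  using assms(1) unfolding reach_def
  by (induction rule: rtranclp_induct) (use assms(2) in \<open>auto intro: rtranclp.rtrancl_into_rtrancl\<close>)

lemma reach_first: assumes "reach W E x y" "x \<noteq> y" shows "\<exists>z\<in>W. x \<in> W \<and> E x z"
  using assms unfolding reach_def
  by (induction rule: converse_rtranclp_induct) auto

definition comp where "comp W E x = {y \<in> W. reach W E x y}"

lemma components_eq: "components W E = comp W E ` W"
  unfolding components_def comp_def by blast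

lemma finite_components: "finite W \<Longrightarrow> finite (components W E)"
  by (simp add: components_eq)

lemma comp_self: "x \<in> W \<Longrightarrow> x \<in> comp W E x"
  by (simp add: comp_def reach_refl)

lemma comp_sub: "comp W E x \<subseteq> W" by (auto simp: comp_def)

lemma comp_closed: "a \<in> comp W E x \<Longrightarrow> b \<in> W \<Longrightarrow> E a b \<Longrightarrow> b \<in> comp W E x"
proof -
  assume a: "a \<in> comp W E x" "b \<in> W" "E a b"
  then have "reach W E x a" "a \<in> W" by (auto simp: comp_def)
  then have "reach W E x b" using reach_trans reach_edge[of a W b E] a(2,3) by metis
  then show ?thesis using a(2) by (simp add: comp_def)
qed

lemma comp_eq: assumes "symirr E" "y \<in> comp W E x" shows "comp W E y = comp W E x"
proof -
  have xy: "reach W E x y" "reach W E y x" using assms reach_sym[OF assms(1)] by (auto simp: comp_def)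
  show ?thesis unfolding comp_def using reach_trans[OF xy(1)] reach_trans[OF xy(2)] by blast
qed

lemma compsI: "x \<in> W \<Longrightarrow> comp W E x \<in> components W E"
  by (simp add: components_eq)

lemma comps_E: assumes "H \<in> components W E" obtains x where "x \<in> W" "H = comp W E x"
  using assms by (auto simp: components_eq)

lemma comps_sub: "H \<in> components W E \<Longrightarrow> H \<subseteq> W"
proof -
  assume "H \<in> components W E"
  then obtain x where "x \<in> W" "H = comp W E x" by (rule comps_E)
  then show ?thesis using comp_sub by simp
qed

lemma comps_ne: "H \<in> components W E \<Longrightarrow> H \<noteq> {}"
proof -
  assume "H \<in> components W E"
  then obtain x where "x \<in> W" "H = comp W E x" by (rule comps_E)
  then show ?thesis using comp_self[of x W E] by auto
qed

lemma comps_at: assumes "symirr E" "H \<in> components W E" "y \<in> H" shows "H = comp W E y"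
proof -
  obtain x where "x \<in> W" "H = comp W E x" using assms(2) by (rule comps_E)
  then show ?thesis using comp_eq[OF assms(1)] assms(3) by metis
qed

lemma comps_closed: assumes "H \<in> components W E" "a \<in> H" "b \<in> W" "E a b" shows "b \<in> H"
proof -
  obtain x where "x \<in> W" "H = comp W E x" using assms(1) by (rule comps_E)
  then show ?thesis using comp_closed[of a W E x b] assms by simp
qed

lemma comps_disj: assumes "symirr E" "H \<in> components W E" "K \<in> components W E" "H \<noteq> K"
  shows "H \<inter> K = {}"
proof (rule ccontr)
  assume "H \<inter> K \<noteq> {}"
  then obtain y where "y \<in> H" "y \<in> K" by blast
  then have "H = comp W E y" "K = comp W E y" using comps_at[OF assms(1) assms(2)] comps_at[OF assms(1) assms(3)] by auto
  then show False using assms(4) by simp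
qed

lemma comps_noedge: assumes "symirr E" "H \<in> components W E" "K \<in> components W E" "H \<noteq> K"
  "a \<in> H" "b \<in> K" shows "\<not> E a b"
proof
  assume "E a b"
  have "b \<in> W" using comps_sub[OF assms(3)] assms(6) by blast
  then have "b \<in> H" using comps_closed[OF assms(2) assms(5) _ \<open>E a b\<close>] by blast
  then show False using comps_disj[OF assms(1-4)] assms(6) by blast
qed

lemma comps_cover: "x \<in> W \<Longrightarrow> \<exists>H\<in>components W E. x \<in> H"
  using compsI[of x W E] comp_self[of x W E] by blast

lemma disc_two: assumes "symirr E" "disconnected W E"
  obtains H K where "H \<in> components W E" "K \<in> components W E" "H \<noteq> K"
proof -
  from assms(2) obtain x y where xy: "x \<in> W" "y \<in> W" "\<not> reach W E x y" unfolding disconnected_def by blast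
  have "y \<notin> comp W E x" using xy by (auto simp: comp_def)
  then have "comp W E x \<noteq> comp W E y" using comp_self[OF xy(2)] by auto
  then show ?thesis by (rule that[OF compsI[OF xy(1)] compsI[OF xy(2)]])
qed

lemma disc_I: assumes "H \<in> components W E" "K \<in> components W E" "H \<noteq> K" "symirr E"
  shows "disconnected W E"
proof -
  obtain x where x: "x \<in> W" "H = comp W E x" using assms(1) by (rule comps_E)
  obtain y where y: "y \<in> W" "K = comp W E y" using assms(2) by (rule comps_E)
  have "\<not> reach W E x y"
  proof
    assume "reach W E x y"
    then have "y \<in> H" using x y by (auto simp: comp_def)
    then have "H = comp W E y" using comps_at[OF assms(4) assms(1)] by blast
    then show False using y(2) assms(3) by simp
  qed
  then show ?thesis using x y unfolding disconnected_def by blast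
qed


lemma symE: "symirr E \<Longrightarrow> E x y \<Longrightarrow> E y x" by (simp add: symirr_def)
lemma irrE: "symirr E \<Longrightarrow> \<not> E x x" by (simp add: symirr_def)

definition pu :: "'a set \<Rightarrow> ('a \<Rightarrow> 'a \<Rightarrow> bool) \<Rightarrow> bool" where
  "pu V E \<longleftrightarrow> (\<exists>V1 V2 v. V1 \<subseteq> V \<and> V2 \<subseteq> V \<and> v \<in> V \<and>
        V = V1 \<union> V2 \<and> V1 \<inter> V2 = {v} \<and> card V1 > 1 \<and> card V2 > 1 \<and>
        cograph V1 E \<and> cograph V2 E \<and> (\<forall>x\<in>V1 - {v}. \<forall>y\<in>V2 - {v}. \<not> E x y))"

definition nbr where "nbr E v X \<longleftrightarrow> (\<exists>a\<in>X. E v a)"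
definition mixed where "mixed E v X \<longleftrightarrow> (\<exists>c\<in>X. \<exists>d\<in>X. E v c \<and> E c d \<and> \<not> E v d)"

locale gv =
  fixes W :: "'a set" and E :: "'a \<Rightarrow> 'a \<Rightarrow> bool" and v :: 'a
  assumes gsym: "symirr E" and vW: "v \<notin> W"
begin

abbreviation "C \<equiv> components W E"

lemma cl: "x \<in> W \<Longrightarrow> y \<in> W \<Longrightarrow> E x y \<Longrightarrow> y \<in> comp W E x"
  by (rule comp_closed[OF comp_self])

lemma cl2: "z \<in> comp W E x \<Longrightarrow> y \<in> W \<Longrightarrow> E z y \<Longrightarrow> y \<in> comp W E x"
  by (rule comp_closed)

lemma cl3: "z \<in> comp W E x \<Longrightarrow> y \<in> W \<Longrightarrow> E y z \<Longrightarrow> y \<in> comp W E x"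
  using comp_closed symE[OF gsym] by metis

lemma locality:
  assumes "a \<in> W \<union> {v}" "b \<in> W \<union> {v}" "c \<in> W \<union> {v}" "d \<in> W \<union> {v}" "distinct [a,b,c,d]"
    "E a b" "E b c" "E c d"
  shows "\<exists>H\<in>C. \<exists>K\<in>C. {a,b,c,d} \<subseteq> H \<union> K \<union> {v} \<and> H \<inter> {a,b,c,d} \<noteq> {} \<and> K \<inter> {a,b,c,d} \<noteq> {}"
proof -
  have ca: "\<And>x. x \<in> W \<Longrightarrow> comp W E x \<in> C" by (rule compsI)
  have wit: "\<And>H K x y. H \<in> C \<Longrightarrow> K \<in> C \<Longrightarrow> {a,b,c,d} \<subseteq> H \<union> K \<union> {v} \<Longrightarrow> x \<in> H \<Longrightarrow> x \<in> {a,b,c,d}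
     \<Longrightarrow> y \<in> K \<Longrightarrow> y \<in> {a,b,c,d} \<Longrightarrow> ?thesis" by blast
  consider "v = a" | "v = b" | "v = c" | "v = d" | "v \<notin> {a,b,c,d}" by blast
  then show ?thesis
  proof cases
    case 1
    then have w: "b \<in> W" "c \<in> W" "d \<in> W" using assms by auto
    have c: "c \<in> comp W E b" using cl w assms by blast
    have d: "d \<in> comp W E b" using cl2[OF c] w assms by blast
    show ?thesis
      apply (rule wit[OF ca[OF w(1)] ca[OF w(1)] _ comp_self[OF w(1)] _ comp_self[OF w(1)]])
      using c d 1 comp_self[OF w(1)] by auto
  next
    case 2
    then have w: "a \<in> W" "c \<in> W" "d \<in> W" using assms by auto
    have d: "d \<in> comp W E c" using cl w assms by blast
    show ?thesis
      apply (rule wit[OF ca[OF w(1)] ca[OF w(2)] _ comp_self[OF w(1)] _ comp_self[OF w(2)]])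
      using d 2 comp_self[OF w(1)] comp_self[OF w(2)] by auto
  next
    case 3
    then have w: "a \<in> W" "b \<in> W" "d \<in> W" using assms by auto
    have b: "b \<in> comp W E a" using cl w assms by blast
    show ?thesis
      apply (rule wit[OF ca[OF w(1)] ca[OF w(3)] _ comp_self[OF w(1)] _ comp_self[OF w(3)]])
      using b 3 comp_self[OF w(1)] comp_self[OF w(3)] by auto
  next
    case 4
    then have w: "a \<in> W" "b \<in> W" "c \<in> W" using assms by auto
    have b: "b \<in> comp W E a" using cl w assms by blast
    have c: "c \<in> comp W E a" using cl2[OF b] w assms by blast
    show ?thesis
      apply (rule wit[OF ca[OF w(1)] ca[OF w(1)] _ comp_self[OF w(1)] _ comp_self[OF w(1)]])
      using b c 4 comp_self[OF w(1)] by auto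
  next
    case 5
    then have w: "a \<in> W" "b \<in> W" "c \<in> W" "d \<in> W" using assms by auto
    have b: "b \<in> comp W E a" using cl w assms by blast
    have c: "c \<in> comp W E a" using cl2[OF b] w assms by blast
    have d: "d \<in> comp W E a" using cl2[OF c] w assms by blast
    show ?thesis
      apply (rule wit[OF ca[OF w(1)] ca[OF w(1)] _ comp_self[OF w(1)] _ comp_self[OF w(1)]])
      using b c d comp_self[OF w(1)] by auto
  qed
qed

lemma locality2:
  assumes "has_induced_P4 S E" "S \<subseteq> W \<union> {v}"
  shows "\<exists>H\<in>C. \<exists>K\<in>C. has_induced_P4 (H \<union> K \<union> {v}) E \<and> H \<inter> S \<noteq> {} \<and> K \<inter> S \<noteq> {}"
proof -
  obtain a b c d where abcd: "a \<in> S" "b \<in> S" "c \<in> S" "d \<in> S" "distinct [a,b,c,d]"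
    "E a b" "E b c" "E c d" "\<not> E a c" "\<not> E a d" "\<not> E b d"
    using assms(1) unfolding has_induced_P4_def by blast
  obtain H K where HK: "H \<in> C" "K \<in> C" "{a,b,c,d} \<subseteq> H \<union> K \<union> {v}"
      "H \<inter> {a,b,c,d} \<noteq> {}" "K \<inter> {a,b,c,d} \<noteq> {}"
    using locality[of a b c d] abcd assms(2) by blast
  have "has_induced_P4 (H \<union> K \<union> {v}) E"
    apply (rule P4_I[of a _ b c d]) using abcd HK(3) by auto
  moreover have "H \<inter> S \<noteq> {}" "K \<inter> S \<noteq> {}" using HK(4,5) abcd(1-4) by auto
  ultimately show ?thesis using HK(1,2) by blast
qed

lemma side: "H \<in> C \<Longrightarrow> x \<in> H \<Longrightarrow> y \<in> W \<Longrightarrow> E x y \<Longrightarrow> y \<in> H"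
  by (rule comps_closed)

lemma mixed_nbr_P4:
  assumes "X \<in> C" "Y \<in> C" "X \<noteq> Y" "nbr E v X" "mixed E v Y"
  shows "has_induced_P4 (X \<union> Y \<union> {v}) E"
proof -
  obtain a where a: "a \<in> X" "E v a" using assms(4) by (auto simp: nbr_def)
  obtain c d where cd: "c \<in> Y" "d \<in> Y" "E v c" "E c d" "\<not> E v d" using assms(5) by (auto simp: mixed_def)
  have XW: "X \<subseteq> W" "Y \<subseteq> W" using comps_sub assms(1,2) by auto
  have disj: "X \<inter> Y = {}" using comps_disj[OF gsym assms(1-3)] .
  have ne: "\<not> E a c" "\<not> E a d" using comps_noedge[OF gsym assms(1-3)] a cd by auto
  have "c \<noteq> d" using cd(4) irrE[OF gsym] by metis
  moreover have "a \<noteq> v" "c \<noteq> v" "d \<noteq> v" using XW a cd vW by auto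
  moreover have "a \<noteq> c" "a \<noteq> d" using disj a cd by auto
  ultimately show ?thesis
    apply (intro P4_I[of a _ v c d])
    using a cd ne symE[OF gsym, of v a] by auto
qed

lemma gamma_shape:
  assumes "H \<in> C" "K \<in> C" "H \<noteq> K" "cograph (H \<union> {v}) E" "cograph (K \<union> {v}) E"
    "has_induced_P4 (H \<union> K \<union> {v}) E"
  shows "nbr E v H \<and> nbr E v K \<and> (mixed E v H \<or> mixed E v K)"
proof -
  obtain a b c d where abcd: "a \<in> H \<union> K \<union> {v}" "b \<in> H \<union> K \<union> {v}" "c \<in> H \<union> K \<union> {v}" "d \<in> H \<union> K \<union> {v}"
    "distinct [a,b,c,d]" "E a b" "E b c" "E c d" "\<not> E a c" "\<not> E a d" "\<not> E b d"
    using assms(6) unfolding has_induced_P4_def by blast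
  have HW: "H \<subseteq> W" "K \<subseteq> W" using comps_sub assms(1,2) by auto
  have disj: "H \<inter> K = {}" using comps_disj[OF gsym assms(1-3)] .
  have sH: "\<And>x y. x \<in> H \<Longrightarrow> y \<in> H \<union> K \<union> {v} \<Longrightarrow> y \<noteq> v \<Longrightarrow> E x y \<Longrightarrow> y \<in> H"
    using side[OF assms(1)] HW by blast
  have sK: "\<And>x y. x \<in> K \<Longrightarrow> y \<in> H \<union> K \<union> {v} \<Longrightarrow> y \<noteq> v \<Longrightarrow> E x y \<Longrightarrow> y \<in> K"
    using side[OF assms(2)] HW by blast
  have nH: "\<not> {a,b,c,d} \<subseteq> H \<union> {v}"
  proof
    assume "{a,b,c,d} \<subseteq> H \<union> {v}"
    then have "has_induced_P4 (H \<union> {v}) E" using abcd by (intro P4_I[of a _ b c d]) auto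
    then show False using assms(4) by (simp add: cograph_def)
  qed
  have nK: "\<not> {a,b,c,d} \<subseteq> K \<union> {v}"
  proof
    assume "{a,b,c,d} \<subseteq> K \<union> {v}"
    then have "has_induced_P4 (K \<union> {v}) E" using abcd by (intro P4_I[of a _ b c d]) auto
    then show False using assms(5) by (simp add: cograph_def)
  qed
  have Eba: "E b a" "E c b" "E d c" using abcd(6,7,8) symE[OF gsym] by auto
  have nvE: "\<not> E v v" using irrE[OF gsym] .
  consider "v = a" | "v = b" | "v = c" | "v = d" | "v \<notin> {a,b,c,d}" by blast
  then show ?thesis
  proof cases
    case 1
    then have vv: "c \<noteq> v" "d \<noteq> v" "b \<noteq> v" using abcd(5) by auto
    have b: "b \<in> H \<or> b \<in> K" using abcd(2) vv by blast
    have "b \<in> H \<Longrightarrow> c \<in> H" by (rule sH[OF _ abcd(3) vv(1) abcd(7)])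
    moreover have "c \<in> H \<Longrightarrow> d \<in> H" by (rule sH[OF _ abcd(4) vv(2) abcd(8)])
    moreover have "b \<in> K \<Longrightarrow> c \<in> K" by (rule sK[OF _ abcd(3) vv(1) abcd(7)])
    moreover have "c \<in> K \<Longrightarrow> d \<in> K" by (rule sK[OF _ abcd(4) vv(2) abcd(8)])
    ultimately have "{a,b,c,d} \<subseteq> H \<union> {v} \<or> {a,b,c,d} \<subseteq> K \<union> {v}" using b 1 by blast
    then show ?thesis using nH nK by blast
  next
    case 4
    then have vv: "c \<noteq> v" "a \<noteq> v" "b \<noteq> v" using abcd(5) by auto
    have a: "a \<in> H \<or> a \<in> K" using abcd(1) vv by blast
    have "a \<in> H \<Longrightarrow> b \<in> H" by (rule sH[OF _ abcd(2) vv(3) abcd(6)])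
    moreover have "b \<in> H \<Longrightarrow> c \<in> H" by (rule sH[OF _ abcd(3) vv(1) abcd(7)])
    moreover have "a \<in> K \<Longrightarrow> b \<in> K" by (rule sK[OF _ abcd(2) vv(3) abcd(6)])
    moreover have "b \<in> K \<Longrightarrow> c \<in> K" by (rule sK[OF _ abcd(3) vv(1) abcd(7)])
    ultimately have "{a,b,c,d} \<subseteq> H \<union> {v} \<or> {a,b,c,d} \<subseteq> K \<union> {v}" using a 4 by blast
    then show ?thesis using nH nK by blast
  next
    case 5
    then have vv: "c \<noteq> v" "d \<noteq> v" "b \<noteq> v" "a \<noteq> v" by auto
    have a: "a \<in> H \<or> a \<in> K" using abcd(1) vv by blast
    have "a \<in> H \<Longrightarrow> b \<in> H" by (rule sH[OF _ abcd(2) vv(3) abcd(6)])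
    moreover have "b \<in> H \<Longrightarrow> c \<in> H" by (rule sH[OF _ abcd(3) vv(1) abcd(7)])
    moreover have "c \<in> H \<Longrightarrow> d \<in> H" by (rule sH[OF _ abcd(4) vv(2) abcd(8)])
    moreover have "a \<in> K \<Longrightarrow> b \<in> K" by (rule sK[OF _ abcd(2) vv(3) abcd(6)])
    moreover have "b \<in> K \<Longrightarrow> c \<in> K" by (rule sK[OF _ abcd(3) vv(1) abcd(7)])
    moreover have "c \<in> K \<Longrightarrow> d \<in> K" by (rule sK[OF _ abcd(4) vv(2) abcd(8)])
    ultimately have "{a,b,c,d} \<subseteq> H \<union> {v} \<or> {a,b,c,d} \<subseteq> K \<union> {v}" using a by blast
    then show ?thesis using nH nK by blast
  next
    case 2
    then have vv: "a \<noteq> v" "c \<noteq> v" "d \<noteq> v" using abcd(5) by auto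
    have a: "a \<in> H \<or> a \<in> K" using abcd(1) vv by blast
    have c: "c \<in> H \<or> c \<in> K" using abcd(3) vv by blast
    have dH: "c \<in> H \<Longrightarrow> d \<in> H" by (rule sH[OF _ abcd(4) vv(3) abcd(8)])
    have dK: "c \<in> K \<Longrightarrow> d \<in> K" by (rule sK[OF _ abcd(4) vv(3) abcd(8)])
    have o: "(a \<in> H \<and> c \<in> K) \<or> (a \<in> K \<and> c \<in> H)"
    proof -
      have "\<not> (a \<in> H \<and> c \<in> H)" using nH dH 2 by blast
      moreover have "\<not> (a \<in> K \<and> c \<in> K)" using nK dK 2 by blast
      ultimately show ?thesis using a c by blast
    qed
    have e: "E v a" "E v c" "E c d" "\<not> E v d" using 2 abcd(6,7,8,11) Eba by auto
    show ?thesis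
    proof (cases "a \<in> H")
      case True
      then have "c \<in> K" "d \<in> K" using o dK disj by auto
      then show ?thesis using True e unfolding nbr_def mixed_def by blast
    next
      case False
      then have "a \<in> K" "c \<in> H" "d \<in> H" using o dH by auto
      then show ?thesis using e unfolding nbr_def mixed_def by blast
    qed
  next
    case 3
    then have vv: "a \<noteq> v" "b \<noteq> v" "d \<noteq> v" using abcd(5) by auto
    have a: "a \<in> H \<or> a \<in> K" using abcd(1) vv by blast
    have d: "d \<in> H \<or> d \<in> K" using abcd(4) vv by blast
    have bH: "a \<in> H \<Longrightarrow> b \<in> H" by (rule sH[OF _ abcd(2) vv(2) abcd(6)])
    have bK: "a \<in> K \<Longrightarrow> b \<in> K" by (rule sK[OF _ abcd(2) vv(2) abcd(6)])
    have o: "(a \<in> H \<and> d \<in> K) \<or> (a \<in> K \<and> d \<in> H)"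
    proof -
      have "\<not> (a \<in> H \<and> d \<in> H)" using nH bH 3 by blast
      moreover have "\<not> (a \<in> K \<and> d \<in> K)" using nK bK 3 by blast
      ultimately show ?thesis using a d by blast
    qed
    have e: "E v b" "E b a" "\<not> E v a" "E v d" using 3 abcd(6,8,9) Eba symE[OF gsym, of v a] by auto
    show ?thesis
    proof (cases "a \<in> H")
      case True
      then have "b \<in> H" "d \<in> K" using o bH disj by auto
      then show ?thesis using True e unfolding nbr_def mixed_def by blast
    next
      case False
      then have "a \<in> K" "b \<in> K" "d \<in> H" using o bK by auto
      then show ?thesis using e unfolding nbr_def mixed_def by blast
    qed
  qed
qed

lemma pu_to_P2:
  assumes WAB: "W = A \<union> B" and AB: "A \<inter> B = {}" "A \<noteq> {}" "B \<noteq> {}"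
    and cA: "cograph (A \<union> {v}) E" and cB: "cograph (B \<union> {v}) E"
    and ne: "\<forall>x\<in>A. \<forall>y\<in>B. \<not> E x y"
  shows "disconnected W E \<and> (\<forall>H\<in>C. cograph (H \<union> {v}) E) \<and>
    (\<exists>H0\<in>C. \<forall>H\<in>C. \<forall>K\<in>C. Gamma_edge V E v H K \<longrightarrow> H0 = H \<or> H0 = K)"
proof -
  have clA: "\<And>a b. a \<in> A \<Longrightarrow> b \<in> W \<Longrightarrow> E a b \<Longrightarrow> b \<in> A" using WAB ne by blast
  have clB: "\<And>a b. a \<in> B \<Longrightarrow> b \<in> W \<Longrightarrow> E a b \<Longrightarrow> b \<in> B"
  proof -
    fix a b assume "a \<in> B" "b \<in> W" "E a b"
    then have "E b a" using symE[OF gsym] by blast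
    then show "b \<in> B" using WAB ne \<open>a \<in> B\<close> \<open>b \<in> W\<close> by blast
  qed
  have sideAB: "\<And>H. H \<in> C \<Longrightarrow> H \<subseteq> A \<or> H \<subseteq> B"
  proof -
    fix H assume "H \<in> C"
    then obtain x where x: "x \<in> W" "H = comp W E x" by (rule comps_E)
    show "H \<subseteq> A \<or> H \<subseteq> B"
    proof (cases "x \<in> A")
      case True
      have "H \<subseteq> A"
      proof
        fix y assume "y \<in> H"
        then have "reach W E x y" using x by (simp add: comp_def)
        then show "y \<in> A" using reach_closed[of W E x y A] True clA by blast
      qed
      then show ?thesis ..
    next
      case False
      then have xB: "x \<in> B" using x WAB by blast
      have "H \<subseteq> B"
      proof
        fix y assume "y \<in> H"
        then have "reach W E x y" using x by (simp add: comp_def)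
        then show "y \<in> B" using reach_closed[of W E x y B] xB clB by blast
      qed
      then show ?thesis ..
    qed
  qed
  have notboth: "\<And>H. H \<in> C \<Longrightarrow> H \<subseteq> A \<Longrightarrow> H \<subseteq> B \<Longrightarrow> False"
    using comps_ne AB(1) by blast
  have disc: "disconnected W E"
  proof -
    obtain a b where ab: "a \<in> A" "b \<in> B" using AB by blast
    have "\<not> reach W E a b"
    proof
      assume "reach W E a b"
      then have "b \<in> A" using reach_closed[of W E a b A] ab clA by blast
      then show False using ab AB(1) by blast
    qed
    moreover have "a \<in> W" "b \<in> W" using ab WAB by auto
    ultimately show ?thesis unfolding disconnected_def by blast
  qed
  have cogH: "\<And>H. H \<in> C \<Longrightarrow> cograph (H \<union> {v}) E"
  proof -
    fix H assume "H \<in> C"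
    then consider "H \<subseteq> A" | "H \<subseteq> B" using sideAB by blast
    then show "cograph (H \<union> {v}) E"
    proof cases
      case 1 then have "H \<union> {v} \<subseteq> A \<union> {v}" by auto
      then show ?thesis by (rule cograph_mono[OF cA])
    next
      case 2 then have "H \<union> {v} \<subseteq> B \<union> {v}" by auto
      then show ?thesis by (rule cograph_mono[OF cB])
    qed
  qed
  define R where "R X Y \<longleftrightarrow> X \<in> C \<and> Y \<in> C \<and> X \<subseteq> A \<and> Y \<subseteq> B \<and> Gamma_edge V E v X Y" for X Y
  have RG: "\<And>H K. H \<in> C \<Longrightarrow> K \<in> C \<Longrightarrow> Gamma_edge V E v H K \<Longrightarrow> R H K \<or> R K H"
  proof -
    fix H K assume HK: "H \<in> C" "K \<in> C" "Gamma_edge V E v H K"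
    then have P: "has_induced_P4 (H \<union> K \<union> {v}) E" by (simp add: Gamma_edge_def)
    have eq: "K \<union> H \<union> {v} = H \<union> K \<union> {v}" by blast
    have G2: "Gamma_edge V E v K H" using HK(3) unfolding Gamma_edge_def eq by metis
    have n1: "\<not> (H \<subseteq> A \<and> K \<subseteq> A)"
    proof
      assume "H \<subseteq> A \<and> K \<subseteq> A"
      then have "H \<union> K \<union> {v} \<subseteq> A \<union> {v}" by blast
      then have "has_induced_P4 (A \<union> {v}) E" by (rule P4_mono[OF P])
      then show False using cA by (simp add: cograph_def)
    qed
    have n2: "\<not> (H \<subseteq> B \<and> K \<subseteq> B)"
    proof
      assume "H \<subseteq> B \<and> K \<subseteq> B"
      then have "H \<union> K \<union> {v} \<subseteq> B \<union> {v}" by blast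
      then have "has_induced_P4 (B \<union> {v}) E" by (rule P4_mono[OF P])
      then show False using cB by (simp add: cograph_def)
    qed
    have "(H \<subseteq> A \<and> K \<subseteq> B) \<or> (K \<subseteq> A \<and> H \<subseteq> B)" using sideAB[OF HK(1)] sideAB[OF HK(2)] n1 n2 by blast
    then show "R H K \<or> R K H" unfolding R_def using HK G2 by blast
  qed
  have claim: "\<And>H1 K1 H2 K2. R H1 K1 \<Longrightarrow> R H2 K2 \<Longrightarrow> H1 = H2 \<or> K1 = K2"
  proof (rule ccontr)
    fix H1 K1 H2 K2 assume r: "R H1 K1" "R H2 K2" and n: "\<not> (H1 = H2 \<or> K1 = K2)"
    have sh: "nbr E v X \<and> nbr E v Y \<and> (mixed E v X \<or> mixed E v Y)" if "R X Y" for X Y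
    proof -
      have XY: "X \<in> C" "Y \<in> C" "Gamma_edge V E v X Y" using that by (auto simp: R_def)
      then have "X \<noteq> Y" "has_induced_P4 (X \<union> Y \<union> {v}) E" by (auto simp: Gamma_edge_def)
      then show ?thesis using gamma_shape[OF XY(1,2)] cogH XY by blast
    qed
    have s1: "mixed E v H1 \<or> mixed E v K1" using sh[OF r(1)] by blast
    have s2: "nbr E v H2" "nbr E v K2" using sh[OF r(2)] by auto
    have sub: "H1 \<subseteq> A" "H2 \<subseteq> A" "K1 \<subseteq> B" "K2 \<subseteq> B" "H1 \<in> C" "H2 \<in> C" "K1 \<in> C" "K2 \<in> C"
      using r by (auto simp: R_def)
    show False
    proof (cases "mixed E v H1")
      case True
      have "H2 \<noteq> H1" using n by blast
      then have "has_induced_P4 (H2 \<union> H1 \<union> {v}) E" using mixed_nbr_P4[OF sub(6) sub(5) _ s2(1) True] by blast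
      moreover have "H2 \<union> H1 \<union> {v} \<subseteq> A \<union> {v}" using sub by blast
      ultimately have "has_induced_P4 (A \<union> {v}) E" by (rule P4_mono)
      then show False using cA by (simp add: cograph_def)
    next
      case False
      then have m: "mixed E v K1" using s1 by blast
      have "K2 \<noteq> K1" using n by blast
      then have "has_induced_P4 (K2 \<union> K1 \<union> {v}) E" using mixed_nbr_P4[OF sub(8) sub(7) _ s2(2) m] by blast
      moreover have "K2 \<union> K1 \<union> {v} \<subseteq> B \<union> {v}" using sub by blast
      ultimately have "has_induced_P4 (B \<union> {v}) E" by (rule P4_mono)
      then show False using cB by (simp add: cograph_def)
    qed
  qed
  have star: "\<exists>H0\<in>C. \<forall>H\<in>C. \<forall>K\<in>C. Gamma_edge V E v H K \<longrightarrow> H0 = H \<or> H0 = K"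
  proof (cases "\<exists>X Y. R X Y")
    case False
    obtain H0 K0 where H0: "H0 \<in> C" "K0 \<in> C" using disc_two[OF gsym disc] by metis
    have "\<forall>H\<in>C. \<forall>K\<in>C. Gamma_edge V E v H K \<longrightarrow> H0 = H \<or> H0 = K"
    proof (intro ballI impI)
      fix H K assume "H \<in> C" "K \<in> C" "Gamma_edge V E v H K"
      then have "R H K \<or> R K H" by (rule RG)
      then show "H0 = H \<or> H0 = K" using False by blast
    qed
    then show ?thesis using H0(1) by blast
  next
    case True
    then obtain H1 K1 where r1: "R H1 K1" by blast
    show ?thesis
    proof (cases "\<forall>X Y. R X Y \<longrightarrow> X = H1")
      case True
      have H1: "H1 \<in> C" using r1 by (simp add: R_def)
      have "\<forall>H\<in>C. \<forall>K\<in>C. Gamma_edge V E v H K \<longrightarrow> H1 = H \<or> H1 = K"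
      proof (intro ballI impI)
        fix H K assume "H \<in> C" "K \<in> C" "Gamma_edge V E v H K"
        then have "R H K \<or> R K H" by (rule RG)
        then show "H1 = H \<or> H1 = K" using True by blast
      qed
      then show ?thesis using H1 by blast
    next
      case False
      then obtain H2 K2 where r2: "R H2 K2" "H2 \<noteq> H1" by blast
      then have K: "K2 = K1" using claim[OF r1 r2(1)] by blast
      have all: "\<And>X Y. R X Y \<Longrightarrow> Y = K1"
      proof (rule ccontr)
        fix X Y assume "R X Y" "Y \<noteq> K1"
        then have "X = H1" "X = H2" using claim[OF r1, of X Y] claim[OF r2(1), of X Y] K by auto
        then show False using r2(2) by simp
      qed
      have K1: "K1 \<in> C" using r1 by (simp add: R_def)
      have "\<forall>H\<in>C. \<forall>K\<in>C. Gamma_edge V E v H K \<longrightarrow> K1 = H \<or> K1 = K"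
      proof (intro ballI impI)
        fix H K assume "H \<in> C" "K \<in> C" "Gamma_edge V E v H K"
        then have "R H K \<or> R K H" by (rule RG)
        then show "K1 = H \<or> K1 = K" using all by blast
      qed
      then show ?thesis using K1 by blast
    qed
  qed
  show ?thesis using disc cogH star by blast
qed

lemma star_good:
  assumes cogH: "\<forall>H\<in>C. cograph (H \<union> {v}) E" and H0: "H0 \<in> C"
    and st: "\<forall>H\<in>C. \<forall>K\<in>C. Gamma_edge V E v H K \<longrightarrow> H0 = H \<or> H0 = K"
  shows "cograph ((W \<union> {v}) - H0) E"
  unfolding cograph_def
proof
  assume P: "has_induced_P4 ((W \<union> {v}) - H0) E"
  obtain H K where HK: "H \<in> C" "K \<in> C" "has_induced_P4 (H \<union> K \<union> {v}) E"
    "H \<inter> ((W \<union> {v}) - H0) \<noteq> {}" "K \<inter> ((W \<union> {v}) - H0) \<noteq> {}"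
    using locality2[OF P] by blast
  have "H \<noteq> H0" "K \<noteq> H0" using HK(4,5) by auto
  show False
  proof (cases "H = K")
    case True
    then have "has_induced_P4 (H \<union> {v}) E" using HK(3) by simp
    then show False using cogH HK(1) by (simp add: cograph_def)
  next
    case False
    then have "Gamma_edge V E v H K" using HK(3) by (simp add: Gamma_edge_def)
    then show False using st HK(1,2) \<open>H \<noteq> H0\<close> \<open>K \<noteq> H0\<close> by blast
  qed
qed

lemma le2:
  assumes P: "has_induced_P4 (W \<union> {v}) E"
  shows "card {H\<in>C. cograph (H \<union> {v}) E \<and> cograph ((W \<union> {v}) - H) E} \<le> 2"
proof -
  obtain H K where HK: "H \<in> C" "K \<in> C" "has_induced_P4 (H \<union> K \<union> {v}) E"
    using locality2[OF P] by blast
  have "{H\<in>C. cograph (H \<union> {v}) E \<and> cograph ((W \<union> {v}) - H) E} \<subseteq> {H, K}"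
  proof
    fix X assume X: "X \<in> {H\<in>C. cograph (H \<union> {v}) E \<and> cograph ((W \<union> {v}) - H) E}"
    show "X \<in> {H, K}"
    proof (rule ccontr)
      assume n: "X \<notin> {H, K}"
      have XC: "X \<in> C" using X by simp
      have d1: "X \<inter> H = {}" "X \<inter> K = {}" using comps_disj[OF gsym XC HK(1)] comps_disj[OF gsym XC HK(2)] n by auto
      have "v \<notin> X" using comps_sub[OF XC] vW by blast
      then have "H \<union> K \<union> {v} \<subseteq> (W \<union> {v}) - X" using d1 comps_sub[OF HK(1)] comps_sub[OF HK(2)] by blast
      then have "has_induced_P4 ((W \<union> {v}) - X) E" by (rule P4_mono[OF HK(3)])
      then show False using X by (simp add: cograph_def)
    qed
  qed
  then have "card {H\<in>C. cograph (H \<union> {v}) E \<and> cograph ((W \<union> {v}) - H) E} \<le> card {H, K}"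
    by (intro card_mono) auto
  also have "card {H, K} \<le> 2" by (cases "H = K") auto
  finally show ?thesis .
qed

end

lemma (in gv) good_pu:
  assumes fin: "finite W" and H0: "H0 \<in> C" and K0: "K0 \<in> C" "K0 \<noteq> H0"
    and c1: "cograph (H0 \<union> {v}) E" and c2: "cograph ((W \<union> {v}) - H0) E"
  shows "pu (W \<union> {v}) E"
proof -
  have H0W: "H0 \<subseteq> W" "K0 \<subseteq> W" using comps_sub H0 K0 by auto
  obtain h where h: "h \<in> H0" using comps_ne[OF H0] by blast
  obtain k where k: "k \<in> K0" using comps_ne[OF K0(1)] by blast
  have kH: "k \<notin> H0" using comps_disj[OF gsym K0(1) H0 K0(2)] k by blast
  have hv: "h \<noteq> v" "k \<noteq> v" using h k H0W vW by auto
  have f1: "finite (H0 \<union> {v})" "finite ((W \<union> {v}) - H0)" using fin H0W by (auto intro: finite_subset)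
  have "card {h, v} \<le> card (H0 \<union> {v})" using f1 h by (intro card_mono) auto
  then have card1: "card (H0 \<union> {v}) > 1" using hv by simp
  have "card {k, v} \<le> card ((W \<union> {v}) - H0)" using f1 k kH H0W vW by (intro card_mono) auto
  then have card2: "card ((W \<union> {v}) - H0) > 1" using hv by simp
  have ne: "\<forall>x\<in>(H0 \<union> {v}) - {v}. \<forall>y\<in>((W \<union> {v}) - H0) - {v}. \<not> E x y"
  proof (intro ballI)
    fix x y assume x: "x \<in> (H0 \<union> {v}) - {v}" and y: "y \<in> ((W \<union> {v}) - H0) - {v}"
    show "\<not> E x y"
    proof
      assume "E x y"
      moreover have "x \<in> H0" "y \<in> W" "y \<notin> H0" using x y by auto
      ultimately show False using comps_closed[OF H0] by blast
    qed
  qed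
  have vn: "v \<notin> H0" using H0W vW by blast
  have "H0 \<union> {v} \<subseteq> W \<union> {v}" "(W \<union> {v}) - H0 \<subseteq> W \<union> {v}" "v \<in> W \<union> {v}"
    "W \<union> {v} = (H0 \<union> {v}) \<union> ((W \<union> {v}) - H0)" "(H0 \<union> {v}) \<inter> ((W \<union> {v}) - H0) = {v}"
    using H0W vn by auto
  then show ?thesis unfolding pu_def using card1 card2 c1 c2 ne by blast
qed

lemma two_disc:
  assumes "symirr E" "W = {u, w}" "u \<noteq> w"
  shows "disconnected W E \<or> disconnected W (compl_edges E)"
proof (cases "E u w")
  case True
  have "\<not> reach W (compl_edges E) u w"
  proof
    assume "reach W (compl_edges E) u w"
    then obtain z where "z \<in> W" "compl_edges E u z" using reach_first assms(3) by metis
    then show False using assms True by (auto simp: compl_edges_def)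
  qed
  then show ?thesis using assms unfolding disconnected_def by blast
next
  case False
  have "\<not> reach W E u w"
  proof
    assume "reach W E u w"
    then obtain z where "z \<in> W" "E u z" using reach_first assms(3) by metis
    then show False using assms False irrE[OF assms(1), of u] by auto
  qed
  then show ?thesis using assms unfolding disconnected_def by blast
qed

lemma edge_cross:
  assumes "reach S E p y" "E u p" "\<not> E u y" "p \<in> S"
  shows "\<exists>c d. c \<in> S \<and> d \<in> S \<and> reach S E p c \<and> reach S E p d \<and> E c d \<and> E u c \<and> \<not> E u d"
  using assms(1,3) unfolding reach_def
proof (induction rule: rtranclp_induct)
  case base then show ?case using assms(2) by simp
next
  case (step y z)
  show ?case
  proof (cases "E u y")
    case True
    have "y \<in> S" "z \<in> S" "E y z" using step(2) by auto
    moreover have "reach S E p y" using step(1) unfolding reach_def .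
    moreover have "reach S E p z" using step(1,2) unfolding reach_def by (rule rtranclp.rtrancl_into_rtrancl)
    ultimately show ?thesis using True step(4) unfolding reach_def by blast
  next
    case False
    then show ?thesis using step(3) by blast
  qed
qed

lemma key_P4:
  assumes sy: "symirr E" and u: "u \<in> W" and d1: "disconnected (W - {u}) E"
    and c1: "\<not> disconnected W E" and c2: "\<not> disconnected W (compl_edges E)"
  shows "has_induced_P4 W E"
proof -
  define W' where "W' = W - {u}"
  obtain x1 y1 where xy1: "x1 \<in> W'" "y1 \<in> W'" "\<not> reach W' E x1 y1"
    using d1 unfolding disconnected_def W'_def by blast
  have "x1 \<in> W" "x1 \<noteq> u" using xy1 by (auto simp: W'_def)
  then have "reach W (compl_edges E) u x1" using c2 u unfolding disconnected_def by blast
  then obtain x where x: "x \<in> W" "compl_edges E u x" using reach_first \<open>x1 \<noteq> u\<close> by metis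
  then have xW': "x \<in> W'" and nux: "\<not> E u x" by (auto simp: compl_edges_def W'_def)
  define Cx where "Cx = comp W' E x"
  obtain y where y: "y \<in> W'" "y \<notin> Cx"
  proof (cases "x1 \<in> Cx \<and> y1 \<in> Cx")
    case True
    then have "reach W' E x x1" "reach W' E x y1" by (auto simp: Cx_def comp_def)
    then have "reach W' E x1 y1" using reach_sym[OF sy] reach_trans by metis
    then show ?thesis using xy1 by blast
  next
    case False
    then show ?thesis using that xy1 by blast
  qed
  define Cy where "Cy = comp W' E y"
  have nbr_in: "\<exists>p\<in>comp W' E z. E u p" if z: "z \<in> W'" and w: "w \<in> W'" "w \<notin> comp W' E z" for z w
  proof (rule ccontr)
    assume n: "\<not> (\<exists>p\<in>comp W' E z. E u p)"
    have "reach W E z w" using c1 z w unfolding disconnected_def W'_def by blast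
    moreover have "z \<in> comp W' E z" using comp_self[OF z] .
    moreover have "\<And>a b. a \<in> comp W' E z \<Longrightarrow> b \<in> W \<Longrightarrow> E a b \<Longrightarrow> b \<in> comp W' E z"
    proof -
      fix a b assume a: "a \<in> comp W' E z" "b \<in> W" "E a b"
      show "b \<in> comp W' E z"
      proof (cases "b = u")
        case True
        then have "E u a" using a(3) symE[OF sy] by blast
        then show ?thesis using n a(1) by blast
      next
        case False
        then have "b \<in> W'" using a(2) by (simp add: W'_def)
        then show ?thesis using comp_closed[OF a(1) _ a(3)] by blast
      qed
    qed
    ultimately have "w \<in> comp W' E z" by (rule reach_closed)
    then show False using w by blast
  qed
  obtain p where p: "p \<in> Cx" "E u p" using nbr_in[OF xW' y(1) y(2)[unfolded Cx_def]] unfolding Cx_def by blast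
  have xCy: "x \<notin> Cy"
  proof
    assume "x \<in> Cy"
    then have "reach W' E y x" by (simp add: Cy_def comp_def)
    then have "reach W' E x y" using reach_sym[OF sy] by blast
    then show False using y by (simp add: Cx_def comp_def)
  qed
  obtain q where q: "q \<in> Cy" "E u q" using nbr_in[OF y(1) xW' xCy[unfolded Cy_def]] unfolding Cy_def by blast
  have CxC: "Cx \<in> components W' E" "Cy \<in> components W' E" using compsI xW' y(1) by (auto simp: Cx_def Cy_def)
  have CxCy: "Cx \<noteq> Cy"
  proof
    assume "Cx = Cy"
    then show False using comp_self[OF y(1), of E] y(2) unfolding Cy_def by simp
  qed
  have pW: "p \<in> W'" using p(1) comp_sub[of W' E x] unfolding Cx_def by blast
  have "reach W' E x p" using p(1) by (simp add: Cx_def comp_def)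
  then have "reach W' E p x" using reach_sym[OF sy] by blast
  then obtain c d where cd: "c \<in> W'" "d \<in> W'" "reach W' E p c" "reach W' E p d" "E c d" "E u c" "\<not> E u d"
    using edge_cross[of W' E p x u] p(2) nux pW by blast
  have "reach W' E x c" "reach W' E x d" using \<open>reach W' E x p\<close> cd(3,4) reach_trans by metis+
  then have cdC: "c \<in> Cx" "d \<in> Cx" using cd(1,2) by (auto simp: Cx_def comp_def)
  have nq: "\<not> E d q" "\<not> E c q" using comps_noedge[OF sy CxC CxCy] cdC q(1) by auto
  have qW: "q \<in> W'" using q(1) comp_sub[of W' E y] unfolding Cy_def by blast
  have dis: "q \<noteq> c" "q \<noteq> d" using comps_disj[OF sy CxC CxCy] cdC q(1) by auto
  have "d \<noteq> c" using cd(5) irrE[OF sy] by metis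
  moreover have "d \<noteq> u" "c \<noteq> u" "q \<noteq> u" using cd qW by (auto simp: W'_def)
  moreover have "d \<in> W" "c \<in> W" "q \<in> W" using cd qW by (auto simp: W'_def)
  moreover have "E d c" "E c u" "\<not> E d u" using cd symE[OF sy] by blast+
  ultimately show ?thesis
    apply (intro P4_I[of d _ c u q]) using u q(2) nq dis by auto
qed

lemma seinsche_n:
  "\<forall>W E. symirr E \<longrightarrow> finite W \<longrightarrow> card W = n \<longrightarrow> 2 \<le> n \<longrightarrow> cograph W E \<longrightarrow>
     disconnected W E \<or> disconnected W (compl_edges E)"
proof (induction n rule: less_induct)
  case (less n)
  show ?case
  proof (intro allI impI)
    fix W and E :: "'a \<Rightarrow> 'a \<Rightarrow> bool"
    assume sy: "symirr E" and fin: "finite W" and cn: "card W = n" and n2: "2 \<le> n" and cg: "cograph W E"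
    show "disconnected W E \<or> disconnected W (compl_edges E)"
    proof (rule ccontr)
      assume nd: "\<not> (disconnected W E \<or> disconnected W (compl_edges E))"
      obtain u where u: "u \<in> W" using cn n2 by fastforce
      have cW': "card (W - {u}) = n - 1" using cn u fin by simp
      show False
      proof (cases "n - 1 = 1")
        case True
        then obtain w where "W - {u} = {w}" using cW' card_1_singletonE by metis
        then have "W = {u, w}" "u \<noteq> w" using u by auto
        then show False using two_disc[OF sy] nd by blast
      next
        case False
        then have "2 \<le> n - 1" using n2 by simp
        moreover have "n - 1 < n" using n2 by simp
        moreover have "cograph (W - {u}) E" using cograph_mono[OF cg] by blast
        ultimately have "disconnected (W - {u}) E \<or> disconnected (W - {u}) (compl_edges E)"
          using less.IH[of "n - 1"] sy fin cW' by blast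
        then show False
        proof
          assume "disconnected (W - {u}) E"
          then have "has_induced_P4 W E" using key_P4[OF sy u] nd by blast
          then show False using cg by (simp add: cograph_def)
        next
          assume "disconnected (W - {u}) (compl_edges E)"
          moreover have "\<not> disconnected W (compl_edges (compl_edges E))" using nd compl_compl[OF sy] by simp
          ultimately have "has_induced_P4 W (compl_edges E)"
            using key_P4[OF symirr_compl[OF sy] u] nd by blast
          then show False using cg P4_compl[OF sy] by (simp add: cograph_def)
        qed
      qed
    qed
  qed
qed

lemma F_inv:
  assumes "symirr E" "F = E \<or> F = compl_edges E"
  shows "symirr F" "\<And>X. cograph X F \<longleftrightarrow> cograph X E" "\<And>X. has_induced_P4 X F \<longleftrightarrow> has_induced_P4 X E"
    "Gamma_edge V F v = Gamma_edge V E v"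
proof -
  show "symirr F" using assms(2) symirr_compl[OF assms(1)] assms(1) by (cases "F = E") simp_all
  show "\<And>X. cograph X F \<longleftrightarrow> cograph X E" using assms(2) cograph_compl[OF assms(1)] by (cases "F = E") simp_all
  show "\<And>X. has_induced_P4 X F \<longleftrightarrow> has_induced_P4 X E" using assms(2) P4_compl[OF assms(1)] by (cases "F = E") simp_all
  have "\<And>H K. Gamma_edge V F v H K = Gamma_edge V E v H K" using assms(2) Gamma_compl[OF assms(1)] by (cases "F = E") simp_all
  then show "Gamma_edge V F v = Gamma_edge V E v" by (intro ext)
qed

lemma pseudo_iff:
  assumes g: "graph V E"
  shows "pseudo_cograph V E \<longleftrightarrow> card V \<le> 2 \<or> pu V E \<or> pu V (compl_edges E)"
proof -
  have sy: "symirr E" using g by (rule graph_symirr)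
  have eqv: "(\<forall>x\<in>V1 - {v}. \<forall>y\<in>V2 - {v}. \<not> compl_edges E x y) \<longleftrightarrow> (\<forall>x\<in>V1 - {v}. \<forall>y\<in>V2 - {v}. E x y)"
    if "V1 \<inter> V2 = {v}" for V1 V2 v
  proof -
    have "\<And>x y. x \<in> V1 - {v} \<Longrightarrow> y \<in> V2 - {v} \<Longrightarrow> x \<noteq> y" using that by blast
    then show ?thesis unfolding compl_edges_def by blast
  qed
  show ?thesis
  proof
    assume "pseudo_cograph V E"
    then consider "card V \<le> 2" | V1 V2 v where "V1 \<subseteq> V" "V2 \<subseteq> V" "v \<in> V"
        "V = V1 \<union> V2" "V1 \<inter> V2 = {v}" "card V1 > 1" "card V2 > 1"
        "cograph V1 E" "cograph V2 E"
        "(\<forall>x\<in>V1 - {v}. \<forall>y\<in>V2 - {v}. E x y) \<or> (\<forall>x\<in>V1 - {v}. \<forall>y\<in>V2 - {v}. \<not> E x y)"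
      unfolding pseudo_cograph_def by blast
    then show "card V \<le> 2 \<or> pu V E \<or> pu V (compl_edges E)"
    proof cases
      case 1 then show ?thesis by blast
    next
      case (2 V1 V2 v)
      show ?thesis
      proof (cases "\<forall>x\<in>V1 - {v}. \<forall>y\<in>V2 - {v}. \<not> E x y")
        case True
        then have "pu V E" unfolding pu_def using 2 by blast
        then show ?thesis by blast
      next
        case False
        then have "\<forall>x\<in>V1 - {v}. \<forall>y\<in>V2 - {v}. \<not> compl_edges E x y" using 2(10) eqv[OF 2(5)] by blast
        moreover have "cograph V1 (compl_edges E)" "cograph V2 (compl_edges E)" using 2 cograph_compl[OF sy] by auto
        ultimately have "pu V (compl_edges E)" unfolding pu_def using 2 by blast
        then show ?thesis by blast
      qed
    qed
  next
    assume "card V \<le> 2 \<or> pu V E \<or> pu V (compl_edges E)"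
    then consider "card V \<le> 2" | "pu V E" | "pu V (compl_edges E)" by blast
    then show "pseudo_cograph V E"
    proof cases
      case 1 then show ?thesis unfolding pseudo_cograph_def by blast
    next
      case 2 then show ?thesis unfolding pseudo_cograph_def pu_def by blast
    next
      case 3
      then obtain V1 V2 v where p: "V1 \<subseteq> V" "V2 \<subseteq> V" "v \<in> V"
        "V = V1 \<union> V2" "V1 \<inter> V2 = {v}" "card V1 > 1" "card V2 > 1"
        "cograph V1 (compl_edges E)" "cograph V2 (compl_edges E)"
        "\<forall>x\<in>V1 - {v}. \<forall>y\<in>V2 - {v}. \<not> compl_edges E x y" unfolding pu_def by blast
      have "\<forall>x\<in>V1 - {v}. \<forall>y\<in>V2 - {v}. E x y" using p(10) eqv[OF p(5)] by blast
      moreover have "cograph V1 E" "cograph V2 E" using p cograph_compl[OF sy] by auto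
      ultimately show ?thesis unfolding pseudo_cograph_def using p by blast
    qed
  qed
qed

lemma rhs_pseudo:
  assumes g: "graph V E" and v: "v \<in> V" and F: "F = E \<or> F = compl_edges E"
    and d: "disconnected (V - {v}) F" and H0: "H0 \<in> components (V - {v}) F"
    and c1: "cograph (H0 \<union> {v}) E" and c2: "cograph (V - H0) E"
  shows "pseudo_cograph V E"
proof -
  have sy: "symirr E" using g by (rule graph_symirr)
  have sF: "symirr F" using F_inv[OF sy F] by blast
  have cF: "\<And>X. cograph X F \<longleftrightarrow> cograph X E" using F_inv[OF sy F] by blast
  interpret gv "V - {v}" F v using sF by unfold_locales auto
  have Veq: "(V - {v}) \<union> {v} = V" using v by blast
  obtain H K where HK: "H \<in> C" "K \<in> C" "H \<noteq> K" using disc_two[OF sF d] by metis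
  obtain K0 where K0: "K0 \<in> C" "K0 \<noteq> H0" using HK by metis
  have fin: "finite (V - {v})" using g by (simp add: graph_def)
  have "pu ((V - {v}) \<union> {v}) F" using good_pu[OF fin H0 K0] c1 c2 cF Veq by simp
  then have "pu V F" using Veq by simp
  then show ?thesis using pseudo_iff[OF g] F by blast
qed

lemma cograph_pseudo:
  assumes g: "graph V E" and cg: "cograph V E"
  shows "pseudo_cograph V E"
proof (cases "card V \<le> 2")
  case True then show ?thesis unfolding pseudo_cograph_def by blast
next
  case False
  have sy: "symirr E" using g by (rule graph_symirr)
  have fin: "finite V" using g by (simp add: graph_def)
  obtain v where v: "v \<in> V" using False by fastforce
  have "card (V - {v}) \<ge> 2" using False v fin by simp
  moreover have "cograph (V - {v}) E" using cograph_mono[OF cg] by blast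
  ultimately have "disconnected (V - {v}) E \<or> disconnected (V - {v}) (compl_edges E)"
    using seinsche_n sy fin by blast
  then obtain F where F: "F = E \<or> F = compl_edges E" "disconnected (V - {v}) F" by blast
  have sF: "symirr F" using F_inv[OF sy F(1)] by blast
  obtain H K where HK: "H \<in> components (V - {v}) F" "K \<in> components (V - {v}) F" "H \<noteq> K"
    using disc_two[OF sF F(2)] by metis
  have "H \<union> {v} \<subseteq> V" using comps_sub[OF HK(1)] v by blast
  then have "cograph (H \<union> {v}) E" by (rule cograph_mono[OF cg])
  moreover have "cograph (V - H) E" by (rule cograph_mono[OF cg]) blast
  ultimately show ?thesis using rhs_pseudo[OF g v F(1) F(2) HK(1)] by blast
qed

lemma pseudo_rhs:
  assumes g: "graph V E" and p: "pseudo_cograph V E" and nc: "\<not> cograph V E"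
  shows "\<exists>v\<in>V. \<exists>F. (F = E \<or> F = compl_edges E) \<and> disconnected (V - {v}) F \<and>
      (\<forall>H\<in>components (V - {v}) F. cograph (H \<union> {v}) E) \<and>
      (\<exists>H0\<in>components (V - {v}) F. \<forall>H\<in>components (V - {v}) F. \<forall>H'\<in>components (V - {v}) F.
          Gamma_edge V E v H H' \<longrightarrow> H0 = H \<or> H0 = H') \<and>
      1 \<le> card {H \<in> components (V - {v}) F. cograph (H \<union> {v}) E \<and> cograph (V - H) E} \<and>
      card {H \<in> components (V - {v}) F. cograph (H \<union> {v}) E \<and> cograph (V - H) E} \<le> 2"
proof -
  have sy: "symirr E" using g by (rule graph_symirr)
  have fin: "finite V" using g by (simp add: graph_def)
  have "\<not> card V \<le> 2" using small_cograph[OF fin] nc by blast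
  then obtain F where F: "F = E \<or> F = compl_edges E" "pu V F" using pseudo_iff[OF g] p by blast
  have sF: "symirr F" using F_inv[OF sy F(1)] by blast
  have cF: "\<And>X. cograph X F \<longleftrightarrow> cograph X E" using F_inv[OF sy F(1)] by blast
  have PF: "\<And>X. has_induced_P4 X F \<longleftrightarrow> has_induced_P4 X E" using F_inv[OF sy F(1)] by blast
  have GF: "Gamma_edge V F v = Gamma_edge V E v" for v using F_inv[OF sy F(1)] by blast
  obtain V1 V2 v where pv: "V1 \<subseteq> V" "V2 \<subseteq> V" "v \<in> V"
        "V = V1 \<union> V2" "V1 \<inter> V2 = {v}" "card V1 > 1" "card V2 > 1"
        "cograph V1 F" "cograph V2 F" "\<forall>x\<in>V1 - {v}. \<forall>y\<in>V2 - {v}. \<not> F x y"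
    using F(2) unfolding pu_def by blast
  interpret gv "V - {v}" F v using sF by unfold_locales auto
  define A where "A = V1 - {v}"
  define B where "B = V2 - {v}"
  have fV1: "finite V1" "finite V2" using fin pv(1,2) finite_subset by auto
  have "A \<noteq> {}"
  proof
    assume "A = {}"
    then have "V1 \<subseteq> {v}" unfolding A_def by blast
    then have "card V1 \<le> 1" using card_mono[of "{v}" V1] by simp
    then show False using pv(6) by simp
  qed
  moreover have "B \<noteq> {}"
  proof
    assume "B = {}"
    then have "V2 \<subseteq> {v}" unfolding B_def by blast
    then have "card V2 \<le> 1" using card_mono[of "{v}" V2] by simp
    then show False using pv(7) by simp
  qed
  moreover have "V - {v} = A \<union> B" "A \<inter> B = {}" using pv(4,5) unfolding A_def B_def by blast+
  moreover have "A \<union> {v} = V1" "B \<union> {v} = V2" using pv(5) unfolding A_def B_def by blast+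
  ultimately have P2: "disconnected (V - {v}) F \<and> (\<forall>H\<in>C. cograph (H \<union> {v}) F) \<and>
    (\<exists>H0\<in>C. \<forall>H\<in>C. \<forall>K\<in>C. Gamma_edge V F v H K \<longrightarrow> H0 = H \<or> H0 = K)"
    using pu_to_P2[of A B V] pv(8,9,10) unfolding A_def B_def by simp
  then obtain H0 where H0: "H0 \<in> C" "\<forall>H\<in>C. \<forall>K\<in>C. Gamma_edge V F v H K \<longrightarrow> H0 = H \<or> H0 = K" by blast
  have Veq: "(V - {v}) \<union> {v} = V" using pv(3) by blast
  have "cograph ((V - {v}) \<union> {v} - H0) F" using star_good[OF _ H0(1) H0(2)] P2 by blast
  then have g0: "cograph (V - H0) E" using Veq cF by simp
  have g1: "cograph (H0 \<union> {v}) E" using P2 H0(1) cF by blast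
  let ?S = "{H \<in> C. cograph (H \<union> {v}) E \<and> cograph (V - H) E}"
  have "finite ?S" using finite_components[of "V - {v}" F] fin by simp
  moreover have "H0 \<in> ?S" using H0(1) g0 g1 by simp
  ultimately have "card ?S > 0" using card_gt_0_iff by blast
  then have c1: "1 \<le> card ?S" by simp
  have "has_induced_P4 ((V - {v}) \<union> {v}) F" using nc Veq PF by (simp add: cograph_def)
  then have "card {H\<in>C. cograph (H \<union> {v}) F \<and> cograph (((V - {v}) \<union> {v}) - H) F} \<le> 2" by (rule le2)
  then have c2: "card ?S \<le> 2" using Veq cF by simp
  have a1: "\<forall>H\<in>C. cograph (H \<union> {v}) E" using P2 cF by simp
  have a2: "\<forall>H\<in>C. \<forall>K\<in>C. Gamma_edge V E v H K \<longrightarrow> H0 = H \<or> H0 = K" using H0(2) GF by simp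
  have a0: "disconnected (V - {v}) F" using P2 by simp
  show ?thesis
    apply (rule bexI[OF _ pv(3)])
    apply (rule exI[of _ F])
    apply (intro conjI)
         apply (rule F(1))
        apply (rule a0)
       apply (rule a1)
      apply (rule bexI[of _ H0]) apply (rule a2) apply (rule H0(1))
     apply (rule c1)
    apply (rule c2)
    done
qed

lemma star_pseudo:
  assumes g: "graph V E" and v: "v \<in> V" and F: "F = E \<or> F = compl_edges E"
    and d: "disconnected (V - {v}) F" and cH: "\<forall>H\<in>components (V - {v}) F. cograph (H \<union> {v}) E"
    and H0: "H0 \<in> components (V - {v}) F"
    and st: "\<forall>H\<in>components (V - {v}) F. \<forall>H'\<in>components (V - {v}) F.
                    Gamma_edge V E v H H' \<longrightarrow> H0 = H \<or> H0 = H'"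
  shows "pseudo_cograph V E"
proof -
  have sy: "symirr E" using g by (rule graph_symirr)
  have sF: "symirr F" using F_inv[OF sy F] by blast
  have cF: "\<And>X. cograph X F \<longleftrightarrow> cograph X E" using F_inv[OF sy F] by blast
  have GF: "Gamma_edge V F v = Gamma_edge V E v" using F_inv[OF sy F] by blast
  interpret gv "V - {v}" F v using sF by unfold_locales auto
  have Veq: "(V - {v}) \<union> {v} = V" using v by blast
  have cH': "\<forall>H\<in>C. cograph (H \<union> {v}) F" using cH cF by simp
  have st': "\<forall>H\<in>C. \<forall>K\<in>C. Gamma_edge V F v H K \<longrightarrow> H0 = H \<or> H0 = K" using st GF by simp
  have "cograph ((V - {v}) \<union> {v} - H0) F" by (rule star_good[OF cH' H0 st'])
  then have "cograph (V - H0) E" using Veq cF by simp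
  moreover have "cograph (H0 \<union> {v}) E" using cH H0 by blast
  ultimately show ?thesis using rhs_pseudo[OF g v F d H0] by blast
qed

theorem mainTheorem12:
  fixes V :: "'a set" and E :: "'a \<Rightarrow> 'a \<Rightarrow> bool"
  assumes "graph V E"
  shows "(pseudo_cograph V E \<longleftrightarrow>
            cograph V E \<or>
            (\<exists>v\<in>V. \<exists>F. (F = E \<or> F = compl_edges E) \<and>
               disconnected (V - {v}) F \<and>
               (\<forall>H\<in>components (V - {v}) F. cograph (H \<union> {v}) E) \<and>
               (\<exists>H0\<in>components (V - {v}) F.
                  \<forall>H\<in>components (V - {v}) F. \<forall>H'\<in>components (V - {v}) F.
                    Gamma_edge V E v H H' \<longrightarrow> H0 = H \<or> H0 = H')))
       \<and> (pseudo_cograph V E \<longleftrightarrow>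
            cograph V E \<or>
            (\<exists>v\<in>V. \<exists>F. (F = E \<or> F = compl_edges E) \<and>
               disconnected (V - {v}) F \<and>
               1 \<le> card {H \<in> components (V - {v}) F. cograph (H \<union> {v}) E \<and> cograph (V - H) E} \<and>
               card {H \<in> components (V - {v}) F. cograph (H \<union> {v}) E \<and> cograph (V - H) E} \<le> 2))"
proof -
  have A: "pseudo_cograph V E \<Longrightarrow> \<not> cograph V E \<Longrightarrow> \<exists>v\<in>V. \<exists>F. (F = E \<or> F = compl_edges E) \<and> disconnected (V - {v}) F \<and>
      (\<forall>H\<in>components (V - {v}) F. cograph (H \<union> {v}) E) \<and>
      (\<exists>H0\<in>components (V - {v}) F. \<forall>H\<in>components (V - {v}) F. \<forall>H'\<in>components (V - {v}) F.
          Gamma_edge V E v H H' \<longrightarrow> H0 = H \<or> H0 = H') \<and>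
      1 \<le> card {H \<in> components (V - {v}) F. cograph (H \<union> {v}) E \<and> cograph (V - H) E} \<and>
      card {H \<in> components (V - {v}) F. cograph (H \<union> {v}) E \<and> cograph (V - H) E} \<le> 2"
    by (rule pseudo_rhs[OF assms])
  have B: "cograph V E \<Longrightarrow> pseudo_cograph V E" by (rule cograph_pseudo[OF assms])
  have C2: "pseudo_cograph V E" if h: "\<exists>v\<in>V. \<exists>F. (F = E \<or> F = compl_edges E) \<and>
               disconnected (V - {v}) F \<and>
               (\<forall>H\<in>components (V - {v}) F. cograph (H \<union> {v}) E) \<and>
               (\<exists>H0\<in>components (V - {v}) F.
                  \<forall>H\<in>components (V - {v}) F. \<forall>H'\<in>components (V - {v}) F.
                    Gamma_edge V E v H H' \<longrightarrow> H0 = H \<or> H0 = H')"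
  proof -
    obtain v F H0 where v: "v \<in> V" "F = E \<or> F = compl_edges E" "disconnected (V - {v}) F"
      "\<forall>H\<in>components (V - {v}) F. cograph (H \<union> {v}) E" "H0 \<in> components (V - {v}) F"
      "\<forall>H\<in>components (V - {v}) F. \<forall>H'\<in>components (V - {v}) F.
                    Gamma_edge V E v H H' \<longrightarrow> H0 = H \<or> H0 = H'"
      using h by blast
    show ?thesis by (rule star_pseudo[OF assms v])
  qed
  have C3: "pseudo_cograph V E" if h: "\<exists>v\<in>V. \<exists>F. (F = E \<or> F = compl_edges E) \<and>
               disconnected (V - {v}) F \<and>
               1 \<le> card {H \<in> components (V - {v}) F. cograph (H \<union> {v}) E \<and> cograph (V - H) E} \<and>
               card {H \<in> components (V - {v}) F. cograph (H \<union> {v}) E \<and> cograph (V - H) E} \<le> 2"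
  proof -
    obtain v F where v: "v \<in> V" "F = E \<or> F = compl_edges E" "disconnected (V - {v}) F"
      "1 \<le> card {H \<in> components (V - {v}) F. cograph (H \<union> {v}) E \<and> cograph (V - H) E}"
      using h by blast
    have "{H \<in> components (V - {v}) F. cograph (H \<union> {v}) E \<and> cograph (V - H) E} \<noteq> {}"
      using v(4) by (metis card.empty not_one_le_zero)
    then obtain H0 where H0: "H0 \<in> components (V - {v}) F" "cograph (H0 \<union> {v}) E" "cograph (V - H0) E"
      by blast
    show ?thesis by (rule rhs_pseudo[OF assms v(1,2,3) H0])
  qed
  show ?thesis
  proof (intro conjI iffI)
    assume p: "pseudo_cograph V E"
    show "cograph V E \<or> (\<exists>v\<in>V. \<exists>F. (F = E \<or> F = compl_edges E) \<and>
               disconnected (V - {v}) F \<and>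
               (\<forall>H\<in>components (V - {v}) F. cograph (H \<union> {v}) E) \<and>
               (\<exists>H0\<in>components (V - {v}) F.
                  \<forall>H\<in>components (V - {v}) F. \<forall>H'\<in>components (V - {v}) F.
                    Gamma_edge V E v H H' \<longrightarrow> H0 = H \<or> H0 = H'))"
    proof (cases "cograph V E")
      case False
      then show ?thesis using A[OF p] by blast
    qed simp
  next
    assume p: "pseudo_cograph V E"
    show "cograph V E \<or> (\<exists>v\<in>V. \<exists>F. (F = E \<or> F = compl_edges E) \<and>
               disconnected (V - {v}) F \<and>
               1 \<le> card {H \<in> components (V - {v}) F. cograph (H \<union> {v}) E \<and> cograph (V - H) E} \<and>
               card {H \<in> components (V - {v}) F. cograph (H \<union> {v}) E \<and> cograph (V - H) E} \<le> 2)"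
    proof (cases "cograph V E")
      case False
      then show ?thesis using A[OF p] by blast
    qed simp
  next
    assume "cograph V E \<or> (\<exists>v\<in>V. \<exists>F. (F = E \<or> F = compl_edges E) \<and>
               disconnected (V - {v}) F \<and>
               (\<forall>H\<in>components (V - {v}) F. cograph (H \<union> {v}) E) \<and>
               (\<exists>H0\<in>components (V - {v}) F.
                  \<forall>H\<in>components (V - {v}) F. \<forall>H'\<in>components (V - {v}) F.
                    Gamma_edge V E v H H' \<longrightarrow> H0 = H \<or> H0 = H'))"
    then show "pseudo_cograph V E" using B C2 by blast
  next
    assume "cograph V E \<or> (\<exists>v\<in>V. \<exists>F. (F = E \<or> F = compl_edges E) \<and>
               disconnected (V - {v}) F \<and>
               1 \<le> card {H \<in> components (V - {v}) F. cograph (H \<union> {v}) E \<and> cograph (V - H) E} \<and>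
               card {H \<in> components (V - {v}) F. cograph (H \<union> {v}) E \<and> cograph (V - H) E} \<le> 2)"
    then show "pseudo_cograph V E" using B C3 by blast
  qed
qed

end
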